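(* Let $G$ be a terrain visibility graph. Then for every integer $k \ge 6$, $G$ contains no induced subgraph isomorphic to the complement $\overline{C_k}$ of the cycle on $k$ vertices (i.e., $G$ contains no antihole of size at least $6$).
   Context: A (1.5-dimensional) terrain is an $x$-monotone polygonal chain in the plane given by a finite set $V$ of terrain vertices with pairwise distinct $x$-coordinates. Write $p<q$ if $p^x<q^x$. The terrain visibility graph has vertex set $V$, and for $p<q$ the pair $\{p,q\}$ is an edge if and only if every terrain vertex $r$ with $p<r<q$ satisfies $r^y < p^y + (q^y-p^y)\frac{r^x-p^x}{q^x-p^x}$ (i.e., no vertex between them lies on or above the segment $pq$). A graph is a terrain visibility graph if it is isomorphic to the visibility graph of some terrain. *)

theory Defs
  imports Main "HOL-Library.Product_Plus" Complex_Main
begin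

text \<open>A terrain is given by its finite set of vertices, points in the plane
  (x-coordinate = fst, y-coordinate = snd) with pairwise distinct x-coordinates.\<close>
definition terrain :: "(real \<times> real) set \<Rightarrow> bool" where
  "terrain V \<longleftrightarrow> finite V \<and> inj_on fst V"

definition sees :: "(real \<times> real) set \<Rightarrow> real \<times> real \<Rightarrow> real \<times> real \<Rightarrow> bool" where
  "sees V p q \<longleftrightarrow> (\<forall>r\<in>V. fst p < fst r \<and> fst r < fst q \<longrightarrow>
      snd r < snd p + (snd q - snd p) * (fst r - fst p) / (fst q - fst p))"

definition tvis_edge :: "(real \<times> real) set \<Rightarrow> real \<times> real \<Rightarrow> real \<times> real \<Rightarrow> bool" where
  "tvis_edge V p q \<longleftrightarrow> p \<in> V \<and> q \<in> V \<and>
     ((fst p < fst q \<and> sees V p q) \<or> (fst q < fst p \<and> sees V q p))"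

definition terrain_visibility_graph :: "'a set \<Rightarrow> ('a \<Rightarrow> 'a \<Rightarrow> bool) \<Rightarrow> bool" where
  "terrain_visibility_graph W E \<longleftrightarrow>
     (\<exists>T f. terrain T \<and> bij_betw f W T \<and>
        (\<forall>u\<in>W. \<forall>v\<in>W. u \<noteq> v \<longrightarrow> (E u v \<longleftrightarrow> tvis_edge T (f u) (f v))))"

definition cycle_adj :: "nat \<Rightarrow> nat \<Rightarrow> nat \<Rightarrow> bool" where
  "cycle_adj k i j \<longleftrightarrow> j = Suc i mod k \<or> i = Suc j mod k"

definition has_induced_antihole :: "'a set \<Rightarrow> ('a \<Rightarrow> 'a \<Rightarrow> bool) \<Rightarrow> nat \<Rightarrow> bool" where
  "has_induced_antihole W E k \<longleftrightarrow>
     (\<exists>h. inj_on h {0..<k} \<and> h ` {0..<k} \<subseteq> W \<and>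
        (\<forall>i<k. \<forall>j<k. i \<noteq> j \<longrightarrow> (E (h i) (h j) \<longleftrightarrow> \<not> cycle_adj k i j)))"

end

theory Submission
  imports Defs "HOL-Number_Theory.Cong"
begin


definition slope :: "real \<times> real \<Rightarrow> real \<times> real \<Rightarrow> real" where
  "slope p q = (snd q - snd p) / (fst q - fst p)"

definition below :: "real \<times> real \<Rightarrow> real \<times> real \<Rightarrow> real \<times> real \<Rightarrow> bool" where
  "below p q r \<longleftrightarrow> snd r < snd p + (snd q - snd p) * (fst r - fst p) / (fst q - fst p)"

lemma KL:
  assumes "fst p < fst r" "fst r < fst q"
  shows "below p q r \<longleftrightarrow> slope p r < slope p q"
    and "below p q r \<longleftrightarrow> slope p q < slope r q"
    and "below p q r \<longleftrightarrow> slope p r < slope r q"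
proof -
  obtain a b c d e f where pq: "p = (a,b)" "r = (c,d)" "q = (e,f)" by (metis prod.exhaust)
  have h: "a < c" "c < e" using assms pq by auto
  have 1: "below p q r \<longleftrightarrow> (d - b) * (e - a) < (f - b) * (c - a)"
    using h unfolding below_def pq by (simp add: field_simps)
  have 2: "slope p r < slope p q \<longleftrightarrow> (d - b) * (e - a) < (f - b) * (c - a)"
    using h unfolding slope_def pq by (simp add: field_simps)
  have 3: "slope p q < slope r q \<longleftrightarrow> (f - b) * (e - c) < (f - d) * (e - a)"
    using h unfolding slope_def pq by (simp add: field_simps)
  have 4: "slope p r < slope r q \<longleftrightarrow> (d - b) * (e - c) < (f - d) * (c - a)"
    using h unfolding slope_def pq by (simp add: field_simps)
  have e1: "(d - b) * (e - a) < (f - b) * (c - a) \<longleftrightarrow> (f - b) * (e - c) < (f - d) * (e - a)"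
    by (smt (verit) mult.commute right_diff_distrib)
  have e2: "(d - b) * (e - a) < (f - b) * (c - a) \<longleftrightarrow> (d - b) * (e - c) < (f - d) * (c - a)"
    by (smt (verit) mult.commute right_diff_distrib)
  show "below p q r \<longleftrightarrow> slope p r < slope p q" using 1 2 by simp
  show "below p q r \<longleftrightarrow> slope p q < slope r q" using 1 3 e1 by simp
  show "below p q r \<longleftrightarrow> slope p r < slope r q" using 1 4 e2 by simp
qed

lemma sees_below: "sees V p q \<longleftrightarrow> (\<forall>r\<in>V. fst p < fst r \<and> fst r < fst q \<longrightarrow> below p q r)"
  unfolding sees_def below_def by simp

lemma F1:
  assumes T: "a \<in> T" "b \<in> T" "c \<in> T" "d \<in> T"
    and o: "fst a < fst b" "fst b < fst c" "fst c < fst d"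
    and ac: "sees T a c" and bd: "sees T b d" and inj: "inj_on fst T"
  shows "sees T a d"
  unfolding sees_below
proof (intro ballI impI)
  fix r assume r: "r \<in> T" "fst a < fst r \<and> fst r < fst d"
  have bac: "below a c b" using ac T o unfolding sees_below by auto
  have cbd: "below b d c" using bd T o unfolding sees_below by auto
  have s1: "slope a b < slope a c" "slope a c < slope b c" using bac KL[of a b c] o by auto
  have s2: "slope b c < slope b d" "slope b d < slope c d" using cbd KL[of b c d] o by auto
  have cad: "below a d c" using KL(3)[of a c d] o s1 s2 by auto
  have s3: "slope a c < slope a d" using cad KL(1)[of a c d] o by auto
  have bad: "below a d b" using KL(1)[of a b d] o s1 s3 by auto
  have s4: "slope a d < slope b d" using bad KL(2)[of a b d] o by auto
  consider "fst r < fst c" | "fst r = fst c" | "fst c < fst r" by linarith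
  then show "below a d r"
  proof cases
    case 1
    have "below a c r" using ac r 1 unfolding sees_below by auto
    then have "slope a r < slope a c" using KL(1)[of a r c] r 1 by auto
    then show ?thesis using KL(1)[of a r d] r s3 by auto
  next
    case 2
    then have "r = c" using inj r T unfolding inj_on_def by blast
    then show ?thesis using cad by simp
  next
    case 3
    have "below b d r" using bd r 3 o unfolding sees_below by auto
    then have "slope b d < slope r d" using KL(2)[of b r d] r 3 o by auto
    then show ?thesis using KL(2)[of a r d] r s4 by auto
  qed
qed

lemma notsees_mid:
  assumes T: "a \<in> T" "b \<in> T" "c \<in> T"
    and o: "fst a < fst b" "fst b < fst c"
    and ab: "sees T a b" and bc: "sees T b c" and nac: "\<not> sees T a c" and inj: "inj_on fst T"
  shows "slope b c \<le> slope a c"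
proof -
  obtain r where r: "r \<in> T" "fst a < fst r" "fst r < fst c" "\<not> below a c r"
    using nac unfolding sees_below by auto
  consider "fst r < fst b" | "fst r = fst b" | "fst b < fst r" by linarith
  then show ?thesis
  proof cases
    case 1
    have "below a b r" using ab r 1 unfolding sees_below by auto
    then have "slope a r < slope a b" using KL(1)[of a r b] r 1 by auto
    moreover have "slope a c \<le> slope a r" using KL(1)[of a r c] r by auto
    ultimately have "\<not> below a c b" using KL(1)[of a b c] o by auto
    then show ?thesis using KL(2)[of a b c] o by auto
  next
    case 2
    then have "r = b" using inj r T unfolding inj_on_def by blast
    then have "\<not> below a c b" using r by simp
    then show ?thesis using KL(2)[of a b c] o by auto
  next
    case 3
    have "below b c r" using bc r 3 unfolding sees_below by auto
    then have "slope b c < slope r c" using KL(2)[of b r c] r 3 by auto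
    moreover have "slope r c \<le> slope a c" using KL(2)[of a r c] r by auto
    ultimately show ?thesis by simp
  qed
qed

lemma F2:
  assumes T: "a \<in> T" "b \<in> T" "c \<in> T" "d \<in> T"
    and o: "fst a < fst b" "fst b < fst c" "fst c < fst d"
    and "sees T a b" "sees T b c" "sees T c d" "sees T a d"
    and "\<not> sees T a c" "\<not> sees T b d" and "inj_on fst T"
  shows False
proof -
  have 1: "slope b c \<le> slope a c" using notsees_mid[of a T b c] assms by auto
  have 2: "slope c d \<le> slope b d" using notsees_mid[of b T c d] assms by auto
  have "\<not> below a c b" using KL(2)[of a b c] o 1 by auto
  hence 3: "slope a c \<le> slope a b" using KL(1)[of a b c] o by auto
  have "\<not> below b d c" using KL(2)[of b c d] o 2 by auto
  hence 4: "slope b d \<le> slope b c" using KL(1)[of b c d] o by auto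
  have "below a d b" using assms unfolding sees_below by auto
  hence 5: "slope a b < slope a d" using KL(1)[of a b d] o by auto
  have "below a d c" using assms unfolding sees_below by auto
  hence 6: "slope a d < slope c d" using KL(2)[of a c d] o by auto
  show False using 1 2 3 4 5 6 by linarith
qed

lemma tv_sym: "tvis_edge T p q = tvis_edge T q p"
  unfolding tvis_edge_def by auto

lemma tv_sees: "p \<in> T \<Longrightarrow> q \<in> T \<Longrightarrow> fst p < fst q \<Longrightarrow> tvis_edge T p q = sees T p q"
  unfolding tvis_edge_def by auto

lemma tvF1:
  assumes "inj_on fst T" "a \<in> T" "b \<in> T" "c \<in> T" "d \<in> T"
    "fst a < fst b" "fst b < fst c" "fst c < fst d"
    "tvis_edge T a c" "tvis_edge T b d"
  shows "tvis_edge T a d"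
  using F1[of a T b c d] assms tv_sees[of _ T] by auto

lemma tvF2:
  assumes "inj_on fst T" "a \<in> T" "b \<in> T" "c \<in> T" "d \<in> T"
    "fst a < fst b" "fst b < fst c" "fst c < fst d"
    "tvis_edge T a b" "tvis_edge T b c" "tvis_edge T c d" "tvis_edge T a d"
    "\<not> tvis_edge T a c" "\<not> tvis_edge T b d"
  shows False
  using F2[of a T b c d] assms tv_sees[of _ T] by auto

lemma C4L:
  assumes inj: "inj_on fst T" and T: "p \<in> T" "q \<in> T" "r \<in> T" "s \<in> T"
    and e: "\<not> tvis_edge T p q" "\<not> tvis_edge T r s" "tvis_edge T p r" "tvis_edge T p s"
      "tvis_edge T q r" "tvis_edge T q s"
    and o: "fst p < fst q" "fst p < fst r" "fst p < fst s"
      "fst q \<noteq> fst r" "fst q \<noteq> fst s" "fst r \<noteq> fst s"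
  shows "fst q < fst r"
proof (rule ccontr)
  assume "\<not> fst q < fst r"
  hence rq: "fst r < fst q" using o by auto
  consider "fst s < fst r" | "fst r < fst s \<and> fst s < fst q" | "fst q < fst s" using o(5,6) by (cases "fst s < fst r"; cases "fst q < fst s") auto
  then show False
  proof cases
    case 1
    then show False using tvF1[OF inj, of p s r q] T e o rq tv_sym[of T] by auto
  next
    case 2
    then show False using tvF1[OF inj, of p r s q] T e o rq tv_sym[of T] by auto
  next
    case 3
    then show False using tvF2[OF inj, of p r q s] T e o rq tv_sym[of T] by auto
  qed
qed

lemma PL:
  assumes inj: "inj_on fst T"
    and T: "L \<in> T" "C \<in> T" "D \<in> T" "D3 \<in> T" "B \<in> T" "A \<in> T" "A3 \<in> T"
    and n: "\<not> tvis_edge T L C" "\<not> tvis_edge T L B" "\<not> tvis_edge T C D"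
      "\<not> tvis_edge T D D3" "\<not> tvis_edge T B A" "\<not> tvis_edge T A A3"
    and e: "tvis_edge T B D" "tvis_edge T B D3" "tvis_edge T L D" "tvis_edge T L D3"
      "tvis_edge T L A3" "tvis_edge T L A" "tvis_edge T C A3" "tvis_edge T C A"
      "tvis_edge T C B" "tvis_edge T D A"
    and o: "fst L < fst C" "fst L < fst D" "fst L < fst D3" "fst L < fst B" "fst L < fst A"
      "fst L < fst A3"
    and d: "fst B \<noteq> fst D" "fst B \<noteq> fst D3" "fst D \<noteq> fst D3"
      "fst C \<noteq> fst A" "fst C \<noteq> fst A3" "fst A \<noteq> fst A3"
      "fst A \<noteq> fst D" "fst C \<noteq> fst B" "fst B \<noteq> fst A" "fst C \<noteq> fst D"
    and CB: "fst C < fst B"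
  shows False
proof -
  have s1: "fst B < fst D"
    using C4L[OF inj, of L B D D3] T n e o d by auto
  have s2: "fst B < fst A"
  proof (rule ccontr)
    assume "\<not> fst B < fst A"
    hence AB: "fst A < fst B" using d(9) by linarith
    consider "fst C < fst A" | "fst A < fst C" using d(4) by (cases "fst C < fst A") auto
    then show False
    proof cases
      case 1
      then show False using tvF1[OF inj, of L C A B] T n e o AB by auto
    next
      case 2
      have "fst C < fst A" using C4L[OF inj, of L C A A3] T n e o d tv_sym[of T] by auto
      then show False using 2 by simp
    qed
  qed
  consider "fst D < fst A" | "fst A < fst D" using d(7) by (cases "fst D < fst A") auto
  then show False
  proof cases
    case 1
    then show False using tvF2[OF inj, of C B D A] T n e o s1 s2 CB tv_sym[of T] by auto
  next
    case 2
    then show False using tvF1[OF inj, of C B A D] T n e o s1 s2 CB tv_sym[of T] by auto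
  qed
qed



lemma rot_cancel: "((i0::nat) + x) mod k = (i0 + y) mod k \<longleftrightarrow> x mod k = y mod k"
  using cong_add_lcancel_nat[of i0 x y k] unfolding cong_def .

lemma rot_adj:
  assumes "a < k" "b < k"
  shows "cycle_adj k ((i0 + a) mod k) ((i0 + b) mod k) \<longleftrightarrow> cycle_adj k a b"
proof -
  have 1: "Suc ((i0 + a) mod k) mod k = (i0 + Suc a) mod k" by (simp add: mod_Suc_eq)
  have 2: "Suc ((i0 + b) mod k) mod k = (i0 + Suc b) mod k" by (simp add: mod_Suc_eq)
  show ?thesis unfolding cycle_adj_def 1 2 rot_cancel using assms by simp
qed

lemma CA:
  assumes "k \<ge> 6"
  shows "cycle_adj k 0 1" "cycle_adj k 0 (k-1)" "cycle_adj k 1 2" "cycle_adj k 2 3"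
    "cycle_adj k (k-1) (k-2)" "cycle_adj k (k-2) (k-3)"
    "\<not> cycle_adj k (k-1) 2" "\<not> cycle_adj k (k-1) 3" "\<not> cycle_adj k 0 2" "\<not> cycle_adj k 0 3"
    "\<not> cycle_adj k 0 (k-3)" "\<not> cycle_adj k 0 (k-2)" "\<not> cycle_adj k 1 (k-3)"
    "\<not> cycle_adj k 1 (k-2)" "\<not> cycle_adj k 1 (k-1)" "\<not> cycle_adj k 2 (k-2)"
proof -
  obtain m where k: "k = m + 6" using assms by (metis add.commute le_Suc_ex)
  show "cycle_adj k 0 1" "cycle_adj k 0 (k-1)" "cycle_adj k 1 2" "cycle_adj k 2 3"
    "cycle_adj k (k-1) (k-2)" "cycle_adj k (k-2) (k-3)"
    "\<not> cycle_adj k (k-1) 2" "\<not> cycle_adj k (k-1) 3" "\<not> cycle_adj k 0 2" "\<not> cycle_adj k 0 3"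
    "\<not> cycle_adj k 0 (k-3)" "\<not> cycle_adj k 0 (k-2)" "\<not> cycle_adj k 1 (k-3)"
    "\<not> cycle_adj k 1 (k-2)" "\<not> cycle_adj k 1 (k-1)" "\<not> cycle_adj k 2 (k-2)"
    unfolding cycle_adj_def k by (simp_all add: add.commute[of 6 m])
qed

theorem theorem5:
  fixes W :: "'a set" and E :: "'a \<Rightarrow> 'a \<Rightarrow> bool" and k :: nat
  assumes "terrain_visibility_graph W E"
    and "k \<ge> 6"
  shows "\<not> has_induced_antihole W E k"
proof
  assume "has_induced_antihole W E k"
  then obtain h where h0: "inj_on h {0..<k}" "h ` {0..<k} \<subseteq> W"
    "\<forall>i<k. \<forall>j<k. i \<noteq> j \<longrightarrow> (E (h i) (h j) \<longleftrightarrow> \<not> cycle_adj k i j)"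
    unfolding has_induced_antihole_def by (elim exE conjE) (rule that)
  have h: "inj_on h {0..<k}" "h ` {0..<k} \<subseteq> W"
    "\<And>i j. i<k \<Longrightarrow> j<k \<Longrightarrow> i \<noteq> j \<Longrightarrow> (E (h i) (h j) \<longleftrightarrow> \<not> cycle_adj k i j)"
    using h0 by auto
  obtain T f where Tf0: "terrain T" "bij_betw f W T"
    "\<forall>u\<in>W. \<forall>v\<in>W. u \<noteq> v \<longrightarrow> (E u v \<longleftrightarrow> tvis_edge T (f u) (f v))"
    using assms(1) unfolding terrain_visibility_graph_def by (elim exE conjE) (rule that)
  have Tf: "terrain T" "bij_betw f W T"
    "\<And>u v. u\<in>W \<Longrightarrow> v\<in>W \<Longrightarrow> u \<noteq> v \<Longrightarrow> (E u v \<longleftrightarrow> tvis_edge T (f u) (f v))"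
    using Tf0 by auto
  have inj: "inj_on fst T" using Tf(1) unfolding terrain_def by simp
  define g where "g i = f (h i)" for i
  have gT: "g i \<in> T" if "i < k" for i
    using that h(2) Tf(2) unfolding g_def bij_betw_def by (auto simp: image_subset_iff)
  have ginj: "fst (g i) \<noteq> fst (g j)" if "i < k" "j < k" "i \<noteq> j" for i j
  proof
    assume "fst (g i) = fst (g j)"
    hence "g i = g j" using inj gT that unfolding inj_on_def by blast
    hence "h i = h j" using Tf(2) h(2) that unfolding g_def bij_betw_def inj_on_def by (auto simp: image_subset_iff)
    thus False using h(1) that unfolding inj_on_def by auto
  qed
  have gE: "tvis_edge T (g i) (g j) \<longleftrightarrow> \<not> cycle_adj k i j" if "i < k" "j < k" "i \<noteq> j" for i j
  proof -
    have "h i \<noteq> h j" using h(1) that unfolding inj_on_def by auto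
    moreover have "h i \<in> W" "h j \<in> W" using h(2) that by auto
    ultimately show ?thesis using h(3)[of i j] Tf(3)[of "h i" "h j"] that unfolding g_def by simp
  qed
  have kpos: "k > 0" using assms(2) by simp
  define mn where "mn = Min ((\<lambda>i. fst (g i)) ` {0..<k})"
  have "mn \<in> (\<lambda>i. fst (g i)) ` {0..<k}" unfolding mn_def using kpos by (intro Min_in) auto
  then obtain i0 where i0: "i0 < k" "fst (g i0) = mn" by auto
  have mnle: "mn \<le> fst (g j)" if "j < k" for j unfolding mn_def using that by (intro Min_le) auto
  define V where "V c = g ((i0 + c) mod k)" for c
  have VT: "V c \<in> T" if "c < k" for c unfolding V_def using gT kpos by simp
  have Vd: "fst (V a) \<noteq> fst (V b)" if "a < k" "b < k" "a \<noteq> b" for a b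
  proof -
    have "(i0 + a) mod k \<noteq> (i0 + b) mod k" using that rot_cancel[of i0 a k b] by simp
    then show ?thesis unfolding V_def using ginj kpos by simp
  qed
  have VE: "tvis_edge T (V a) (V b) \<longleftrightarrow> \<not> cycle_adj k a b" if "a < k" "b < k" "a \<noteq> b" for a b
  proof -
    have "(i0 + a) mod k \<noteq> (i0 + b) mod k" using that rot_cancel[of i0 a k b] by simp
    then show ?thesis unfolding V_def using gE kpos rot_adj[of a k b i0] that by simp
  qed
  have V0: "fst (V 0) < fst (V c)" if "c < k" "c \<noteq> 0" for c
  proof -
    have "fst (V 0) = mn" unfolding V_def using i0 by simp
    moreover have "mn \<le> fst (V c)" unfolding V_def using mnle kpos by simp
    ultimately show ?thesis using Vd[of 0 c] that kpos by linarith
  qed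
  note ca = CA[OF assms(2)]
  have k6: "6 \<le> k" by fact
  have idx: "0 < k" "1 < k" "2 < k" "3 < k" "k-1 < k" "k-2 < k" "k-3 < k"
    "(1::nat) \<noteq> 0" "(2::nat) \<noteq> 0" "(3::nat) \<noteq> 0" "k-1 \<noteq> 0" "k-2 \<noteq> 0" "k-3 \<noteq> 0"
    "k-1 \<noteq> 2" "k-1 \<noteq> 3" "k-3 \<noteq> 1" "k-2 \<noteq> 1" "1 \<noteq> k-1" "2 \<noteq> k-2"
    "k-1 \<noteq> k-2" "k-2 \<noteq> k-3" "k-1 \<noteq> k-3" "(1::nat) \<noteq> 2" "(2::nat) \<noteq> 3"
    using k6 by auto
  have VEn: "\<not> tvis_edge T (V a) (V b)" if "a < k" "b < k" "a \<noteq> b" "cycle_adj k a b" for a b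
    using VE[OF that(1,2,3)] that(4) by blast
  have VEp: "tvis_edge T (V a) (V b)" if "a < k" "b < k" "a \<noteq> b" "\<not> cycle_adj k a b" for a b
    using VE[OF that(1,2,3)] that(4) by blast
  have n: "\<not> tvis_edge T (V 0) (V 1)" "\<not> tvis_edge T (V 0) (V (k-1))" "\<not> tvis_edge T (V 1) (V 2)"
      "\<not> tvis_edge T (V 2) (V 3)" "\<not> tvis_edge T (V (k-1)) (V (k-2))" "\<not> tvis_edge T (V (k-2)) (V (k-3))"
    by (rule VEn[OF idx(1) idx(2) idx(8)[symmetric] ca(1)],
        rule VEn[OF idx(1) idx(5) idx(11)[symmetric] ca(2)],
        rule VEn[OF idx(2) idx(3) idx(23) ca(3)],
        rule VEn[OF idx(3) idx(4) idx(24) ca(4)],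
        rule VEn[OF idx(5) idx(6) idx(20) ca(5)],
        rule VEn[OF idx(6) idx(7) idx(21) ca(6)])
  have e: "tvis_edge T (V (k-1)) (V 2)" "tvis_edge T (V (k-1)) (V 3)" "tvis_edge T (V 0) (V 2)"
      "tvis_edge T (V 0) (V 3)" "tvis_edge T (V 0) (V (k-3))" "tvis_edge T (V 0) (V (k-2))"
      "tvis_edge T (V 1) (V (k-3))" "tvis_edge T (V 1) (V (k-2))" "tvis_edge T (V 1) (V (k-1))"
      "tvis_edge T (V 2) (V (k-2))"
    by (rule VEp[OF idx(5) idx(3) idx(14) ca(7)],
        rule VEp[OF idx(5) idx(4) idx(15) ca(8)],
        rule VEp[OF idx(1) idx(3) idx(9)[symmetric] ca(9)],
        rule VEp[OF idx(1) idx(4) idx(10)[symmetric] ca(10)],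
        rule VEp[OF idx(1) idx(7) idx(13)[symmetric] ca(11)],
        rule VEp[OF idx(1) idx(6) idx(12)[symmetric] ca(12)],
        rule VEp[OF idx(2) idx(7) idx(16)[symmetric] ca(13)],
        rule VEp[OF idx(2) idx(6) idx(17)[symmetric] ca(14)],
        rule VEp[OF idx(2) idx(5) idx(18) ca(15)],
        rule VEp[OF idx(3) idx(6) idx(19) ca(16)])
  have o: "fst (V 0) < fst (V 1)" "fst (V 0) < fst (V 2)" "fst (V 0) < fst (V 3)"
      "fst (V 0) < fst (V (k-1))" "fst (V 0) < fst (V (k-2))" "fst (V 0) < fst (V (k-3))"
    by (rule V0[OF idx(2) idx(8)], rule V0[OF idx(3) idx(9)], rule V0[OF idx(4) idx(10)],
        rule V0[OF idx(5) idx(11)], rule V0[OF idx(6) idx(12)], rule V0[OF idx(7) idx(13)])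
  have idx2: "1 \<noteq> k-2" "1 \<noteq> k-3" "k-2 \<noteq> 2" using k6 by auto
  have d: "fst (V (k-1)) \<noteq> fst (V 2)" "fst (V (k-1)) \<noteq> fst (V 3)" "fst (V 2) \<noteq> fst (V 3)"
      "fst (V 1) \<noteq> fst (V (k-2))" "fst (V 1) \<noteq> fst (V (k-3))" "fst (V (k-2)) \<noteq> fst (V (k-3))"
      "fst (V (k-2)) \<noteq> fst (V 2)" "fst (V 1) \<noteq> fst (V (k-1))" "fst (V (k-1)) \<noteq> fst (V (k-2))"
      "fst (V 1) \<noteq> fst (V 2)"
    by (rule Vd[OF idx(5) idx(3) idx(14)], rule Vd[OF idx(5) idx(4) idx(15)],
        rule Vd[OF idx(3) idx(4) idx(24)], rule Vd[OF idx(2) idx(6) idx2(1)],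
        rule Vd[OF idx(2) idx(7) idx2(2)], rule Vd[OF idx(6) idx(7) idx(21)],
        rule Vd[OF idx(6) idx(3) idx2(3)], rule Vd[OF idx(2) idx(5) idx(18)],
        rule Vd[OF idx(5) idx(6) idx(20)], rule Vd[OF idx(2) idx(3) idx(23)])
  have T7: "V 0 \<in> T" "V 1 \<in> T" "V 2 \<in> T" "V 3 \<in> T" "V (k-1) \<in> T" "V (k-2) \<in> T" "V (k-3) \<in> T"
    by (rule VT[OF idx(1)], rule VT[OF idx(2)], rule VT[OF idx(3)], rule VT[OF idx(4)],
        rule VT[OF idx(5)], rule VT[OF idx(6)], rule VT[OF idx(7)])
  consider "fst (V 1) < fst (V (k-1))" | "fst (V (k-1)) < fst (V 1)"
    using d(8) by (cases "fst (V 1) < fst (V (k-1))") auto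
  then show False
  proof cases
    case 1
    show False
      by (rule PL[OF inj T7 n e o d 1])
  next
    case 2
    show False
      by (rule PL[OF inj T7(1,5,6,7,2,3,4) n(2,1,5,6,3,4) e(8,7,6,5,4,3,2,1)
            tv_sym[THEN iffD1, OF e(9)] tv_sym[THEN iffD1, OF e(10)] o(4,5,6,1,2,3)
            d(4,5,6,1,2,3) not_sym[OF d(7)] not_sym[OF d(8)] d(10,9) 2])
  qed
qed

end
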